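(* Let $h>0$, $n\in\mathbb{N}$, and let $\lambda:\mathbb{T}\to\mathbb{R}$ be an $n$-cycle with values $\lambda_0,\dots,\lambda_{n-1}\in\mathbb{R}\setminus\{\pm\tfrac1h\}$, such that $0<|e_{\lambda}(nh)|\neq1$ and $0<|e_{-\lambda}(nh)|\neq1$. Define for $t\in\mathbb{T}$ $$p(t)=\lambda(t+2h),\quad q(t)=\Delta_h\lambda(t+h)-\lambda(t+h)\lambda(t+2h),$$ $$r(t)=\Delta_h^2\lambda(t)-\lambda(t)\Delta_h\lambda(t+h)-\lambda(t)\lambda(t+h)\lambda(t+2h).$$ Then the third-order equation $$\Delta_h^3y(t)+p(t)\Delta_h^2y(t)+q(t)\Delta_h y(t)+r(t)y(t)=0,\qquad t\in\mathbb{T},$$ has Hyers–Ulam stability on $\mathbb{T}$ with Hyers–Ulam stability constant $K=K_0(\lambda)\bigl(K_0(-\lambda)\bigr)^2$.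
   Context: Fix $h>0$ and let $\mathbb{T}=\{0,h,2h,3h,\dots\}$. For $x:\mathbb{T}\to\mathbb{R}$, $\Delta_h x(t)=\frac{x(t+h)-x(t)}{h}$ and $\Delta_h^2x=\Delta_h(\Delta_h x)$, $\Delta_h^3x=\Delta_h(\Delta_h^2 x)$. An $n$-cycle is a function $\mu:\mathbb{T}\to\mathbb{R}$ with $\mu(t)=\mu_k$ whenever $t/h\equiv k\pmod n$, $k\in\{0,\dots,n-1\}$, which has period $n$ and no smaller period. For such $\mu$ define the discrete exponential $e_\mu(t)=\prod_{k=0}^{t/h-1}(1+h\mu(kh))$ (empty product $=1$), so $e_\mu(nh)=\prod_{k=0}^{n-1}(1+h\mu_k)$. For $k\in\{0,\dots,n-1\}$ define $$S_k(\mu)=\sum_{j=1}^{n}\prod_{i=0}^{j-1}\frac{1}{|1+h\mu_{(k+i)\bmod n}|},$$ (e.g. $S_0(\mu)=\frac{1}{|1+h\mu_0|}+\frac{1}{|1+h\mu_0||1+h\mu_1|}+\dots+\frac{1}{|1+h\mu_0|\cdots|1+h\mu_{n-1}|}$), and, when $0<|e_\mu(nh)|\neq1$, $$K_0(\mu)=\frac{h|e_\mu(nh)|}{\bigl|1-|e_\mu(nh)|\bigr|}\max\{S_0(\mu),\dots,S_{n-1}(\mu)\}.$$ Here $-\lambda$ denotes the $n$-cycle with values $-\lambda_0,\dots,-\lambda_{n-1}$. Hyers–Ulam stability: an equation $\mathcal{L}[y](t)=f(t)$, $t\in\mathbb{T}$ (with $\mathcal{L}$ a linear difference operator) has Hyers–Ulam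 stability on $\mathbb{T}$ with Hyers–Ulam stability constant $K>0$ if for every $\varepsilon>0$ and every $\xi:\mathbb{T}\to\mathbb{R}$ with $|\mathcal{L}[\xi](t)-f(t)|\le\varepsilon$ for all $t\in\mathbb{T}$, there is a solution $y:\mathbb{T}\to\mathbb{R}$ of the equation with $|\xi(t)-y(t)|\le K\varepsilon$ for all $t\in\mathbb{T}$. The minimum Hyers–Ulam stability constant is the smallest such $K$. *)

theory Defs
  imports Complex_Main
begin

text \<open>Functions on the time scale T = {0, h, 2h, ...} are represented as functions
  nat \<Rightarrow> real, where index k stands for the point t = k*h.\<close>

definition delta_h :: "real \<Rightarrow> (nat \<Rightarrow> real) \<Rightarrow> nat \<Rightarrow> real" where
  "delta_h h x = (\<lambda>k. (x (Suc k) - x k) / h)"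

definition is_cycle :: "nat \<Rightarrow> (nat \<Rightarrow> real) \<Rightarrow> bool" where
  "is_cycle n \<mu> \<longleftrightarrow> 0 < n \<and> (\<forall>k. \<mu> (k + n) = \<mu> k)
     \<and> (\<forall>m. 0 < m \<and> m < n \<longrightarrow> \<not> (\<forall>k. \<mu> (k + m) = \<mu> k))"

definition e_cyc :: "real \<Rightarrow> nat \<Rightarrow> (nat \<Rightarrow> real) \<Rightarrow> real" where
  "e_cyc h n \<mu> = (\<Prod>k<n. 1 + h * \<mu> k)"

definition S_cyc :: "real \<Rightarrow> nat \<Rightarrow> (nat \<Rightarrow> real) \<Rightarrow> nat \<Rightarrow> real" where
  "S_cyc h n \<mu> k = (\<Sum>j\<in>{1..n}. \<Prod>i<j. 1 / \<bar>1 + h * \<mu> ((k + i) mod n)\<bar>)"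

definition K0 :: "real \<Rightarrow> nat \<Rightarrow> (nat \<Rightarrow> real) \<Rightarrow> real" where
  "K0 h n \<mu> = h * \<bar>e_cyc h n \<mu>\<bar> / \<bar>1 - \<bar>e_cyc h n \<mu>\<bar>\<bar>
      * Max {S_cyc h n \<mu> k | k. k < n}"

definition HU_stable :: "((nat \<Rightarrow> real) \<Rightarrow> nat \<Rightarrow> real) \<Rightarrow> (nat \<Rightarrow> real) \<Rightarrow> real \<Rightarrow> bool" where
  "HU_stable L f K \<longleftrightarrow> K > 0 \<and>
     (\<forall>\<epsilon>>0. \<forall>\<xi>. (\<forall>t. \<bar>L \<xi> t - f t\<bar> \<le> \<epsilon>) \<longrightarrow>
        (\<exists>y. (\<forall>t. L y t = f t) \<and> (\<forall>t. \<bar>\<xi> t - y t\<bar> \<le> K * \<epsilon>)))"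

end

theory Submission
  imports Defs "HOL-Analysis.Analysis"
begin

fun F :: "(nat\<Rightarrow>real) \<Rightarrow> (nat\<Rightarrow>real) \<Rightarrow> real \<Rightarrow> nat \<Rightarrow> real" where
  "F a r x 0 = x" | "F a r x (Suc k) = a k * F a r x k + r k"

lemma fwd_bound:
  assumes "\<And>k. B (Suc k) = \<bar>a k\<bar> * B k + \<delta>" "B 0 \<ge> 0" "\<And>k. \<bar>r k\<bar> \<le> \<delta>"
  shows "\<bar>F a r 0 k\<bar> \<le> B k"
proof (induction k)
  case 0 then show ?case using assms by simp
next
  case (Suc k)
  have "\<bar>F a r 0 (Suc k)\<bar> \<le> \<bar>a k\<bar> * \<bar>F a r 0 k\<bar> + \<bar>r k\<bar>"
    by (simp add: abs_mult[symmetric] abs_triangle_ineq)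
  also have "\<dots> \<le> \<bar>a k\<bar> * B k + \<delta>"
    using Suc assms(3)[of k] by (meson add_mono abs_ge_zero mult_left_mono)
  finally show ?case using assms(1) by simp
qed

lemma F_cont: "continuous_on UNIV (\<lambda>x. F a r x k)"
  by (induction k) (auto intro!: continuous_intros)

lemma bwd_bound:
  assumes a0: "\<And>k. a k \<noteq> 0" and B: "\<And>k. \<bar>a k\<bar> * B k = B (Suc k) + \<delta>"
    and r: "\<And>k. \<bar>r k\<bar> \<le> \<delta>" and Bnn: "\<And>k. B k \<ge> 0"
  shows "\<exists>x. \<forall>k. \<bar>F a r x k\<bar> \<le> B k"
proof -
  define S where "S N = {x. \<forall>k\<le>N. \<bar>F a r x k\<bar> \<le> B k}" for N
  have wit: "\<bar>v\<bar> \<le> B N \<Longrightarrow> \<exists>x. F a r x N = v \<and> (\<forall>k\<le>N. \<bar>F a r x k\<bar> \<le> B k)" for N v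
  proof (induction N arbitrary: v)
    case 0 then show ?case by (intro exI[of _ v]) auto
  next
    case (Suc N)
    define w where "w = (v - r N) / a N"
    have aw: "a N * w = v - r N" using a0[of N] by (simp add: w_def)
    have "\<bar>a N\<bar> * \<bar>w\<bar> \<le> \<bar>a N\<bar> * B N"
    proof -
      have "\<bar>a N\<bar> * \<bar>w\<bar> = \<bar>v - r N\<bar>" using aw by (metis abs_mult)
      also have "\<dots> \<le> B (Suc N) + \<delta>" using Suc.prems r[of N] by linarith
      finally show ?thesis using B[of N] by simp
    qed
    then have "\<bar>w\<bar> \<le> B N" using a0[of N] by simp
    then obtain x where x: "F a r x N = w" "\<forall>k\<le>N. \<bar>F a r x k\<bar> \<le> B k" using Suc.IH by blast
    have "F a r x (Suc N) = v" using x(1) aw by simp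
    then show ?case using x Suc.prems by (intro exI[of _ x]) (auto simp: le_Suc_eq)
  qed
  have cl: "closed (S N)" for N
  proof -
    have "S N = (\<Inter>k\<in>{..N}. {x. \<bar>F a r x k\<bar> \<le> B k})" by (auto simp: S_def)
    moreover have "closed {x. \<bar>F a r x k\<bar> \<le> B k}" for k
      by (intro closed_Collect_le continuous_intros F_cont)
    ultimately show ?thesis by auto
  qed
  have ne: "S N \<noteq> {}" for N
    using wit[of 0 N] Bnn[of N] unfolding S_def by auto
  have bd: "bounded (S 0)"
  proof -
    have "S 0 \<subseteq> cball 0 (B 0)" by (auto simp: S_def dist_real_def)
    then show ?thesis using bounded_cball bounded_subset by blast
  qed
  have mono: "m \<le> N \<Longrightarrow> S N \<subseteq> S m" for m N by (auto simp: S_def)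
  obtain x where "\<And>N. x \<in> S N" using bounded_closed_nest[of S, OF cl ne mono bd] by blast
  then show ?thesis unfolding S_def by blast
qed


lemma periodic_add: fixes b :: "nat \<Rightarrow> 'a" and q :: nat assumes "\<And>k. b (k + n) = b k" shows "b (k + n * q) = b k"
proof (induction q)
  case (Suc q)
  have "b (k + n * Suc q) = b ((k + n * q) + n)" by (simp add: algebra_simps)
  then show ?case using Suc assms by simp
qed simp

lemma periodic_mod: fixes b :: "nat \<Rightarrow> 'a" assumes "\<And>k. b (k + n) = b k" shows "b (k mod n) = b k"
proof -
  have "b (k mod n + n * (k div n)) = b (k mod n)" by (rule periodic_add[of b n, OF assms])
  then show ?thesis by (metis mod_mult_div_eq add.commute)
qed

lemma window:
  fixes b :: "nat \<Rightarrow> real"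
  assumes "\<And>k. b (k + n) = b k" "\<And>k. b k \<noteq> 0"
  shows "(\<Prod>i<n. b (m + i)) = (\<Prod>i<n. b i)"
proof (induction m)
  case 0 then show ?case by simp
next
  case (Suc m)
  define g where "g i = b (m + i)" for i
  have "(\<Prod>i<Suc n. g i) = g 0 * (\<Prod>i<n. g (Suc i))" by (rule prod.lessThan_Suc_shift)
  moreover have "(\<Prod>i<Suc n. g i) = (\<Prod>i<n. g i) * g n" by simp
  moreover have "g n = g 0" by (simp add: g_def assms(1))
  moreover have "g 0 \<noteq> 0" by (simp add: g_def assms(2))
  ultimately have "(\<Prod>i<n. g (Suc i)) = (\<Prod>i<n. g i)" by (metis mult.commute mult_left_cancel)
  then show ?case using Suc by (simp add: g_def)
qed


lemma first_order:
  fixes h \<epsilon> :: real and n s :: nat and \<mu> \<xi> f :: "nat \<Rightarrow> real"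
  assumes h: "h > 0" and n: "n > 0" and per: "\<And>k. \<mu> (k + n) = \<mu> k"
    and nz: "\<And>k. 1 + h * \<mu> k \<noteq> 0" and E1: "\<bar>e_cyc h n \<mu>\<bar> \<noteq> 1" and eps: "\<epsilon> \<ge> 0"
    and approx: "\<And>k. \<bar>delta_h h \<xi> k - \<mu> (k + s) * \<xi> k - f k\<bar> \<le> \<epsilon>"
  shows "\<exists>y. (\<forall>k. delta_h h y k - \<mu> (k + s) * y k = f k) \<and> (\<forall>k. \<bar>\<xi> k - y k\<bar> \<le> K0 h n \<mu> * \<epsilon>)"
proof -
  define a where "a k = 1 + h * \<mu> (k + s)" for k
  define E where "E = e_cyc h n \<mu>"
  define M where "M = Max {S_cyc h n \<mu> k | k. k < n}"
  define T where "T k = (\<Sum>j\<in>{1..n}. \<Prod>i<j. 1 / \<bar>a (k + i)\<bar>)" for k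
  define g where "g k = delta_h h \<xi> k - \<mu> (k + s) * \<xi> k - f k" for k
  define r where "r k = h * g k" for k
  have a0: "a k \<noteq> 0" for k using nz unfolding a_def by simp
  have Ewin: "(\<Prod>i<n. a (m + i)) = E" for m
  proof -
    have "(\<Prod>i<n. a (m+i)) = (\<Prod>i<n. (1 + h*\<mu> (m + s + i)))" by (simp add: a_def algebra_simps)
    also have "\<dots> = (\<Prod>i<n. 1 + h*\<mu> i)"
      by (rule window[where b = "\<lambda>k. 1 + h*\<mu> k"]) (simp_all add: per nz)
    finally show ?thesis by (simp add: E_def e_cyc_def)
  qed
  have E0: "E \<noteq> 0" using Ewin[of 0] a0 by (metis finite_lessThan prod_zero_iff)
  have binv: "(\<Prod>i<n. 1/\<bar>a (m+i)\<bar>) = 1/\<bar>E\<bar>" for m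
    using Ewin[of m] by (simp add: prod_dividef abs_prod[symmetric])
  have Tshift: "T k = (\<Sum>j<n. \<Prod>i<Suc j. 1/\<bar>a (k+i)\<bar>)" for k
  proof -
    have "{1..n} = {Suc 0..n}" by simp
    then show ?thesis unfolding T_def by (simp only: sum.atLeast1_atMost_eq)
  qed
  have Trec: "\<bar>a k\<bar> * T k = 1 + T (Suc k) - 1/\<bar>E\<bar>" for k
  proof -
    define c where "c j = (\<Prod>i<j. 1 / \<bar>a (Suc k + i)\<bar>)" for j
    have "T k = (\<Sum>j<n. 1/\<bar>a k\<bar> * c j)"
      unfolding Tshift c_def by (simp only: prod.lessThan_Suc_shift) simp
    also have "\<dots> = 1/\<bar>a k\<bar> * (\<Sum>j<n. c j)" by (simp add: sum_distrib_left)
    finally have t1: "T k = 1/\<bar>a k\<bar> * (\<Sum>j<n. c j)" .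
    have t2: "T (Suc k) = (\<Sum>j<n. c (Suc j))" unfolding Tshift c_def by simp
    have "(\<Sum>j<Suc n. c j) = c 0 + (\<Sum>j<n. c (Suc j))" by (rule sum.lessThan_Suc_shift)
    moreover have "(\<Sum>j<Suc n. c j) = (\<Sum>j<n. c j) + c n" by simp
    moreover have "c 0 = 1" by (simp add: c_def)
    moreover have "c n = 1/\<bar>E\<bar>" using binv[of "Suc k"] by (simp add: c_def)
    ultimately have "(\<Sum>j<n. c j) = 1 + T (Suc k) - 1/\<bar>E\<bar>" using t2 by linarith
    then show ?thesis using t1 a0[of k] by simp
  qed
  have Tnn: "T k \<ge> 0" for k by (simp add: T_def sum_nonneg prod_nonneg)
  have TM: "T k \<le> M" for k
  proof -
    have pm: "\<mu> (x mod n) = \<mu> x" for x by (rule periodic_mod[of \<mu> n, OF per])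
    have "T k = S_cyc h n \<mu> ((k + s) mod n)"
    proof -
      have "((k + s) mod n + i) mod n = (k + i + s) mod n" for i
        by (metis mod_add_left_eq add.commute add.assoc)
      then have "\<mu> (((k + s) mod n + i) mod n) = \<mu> (k + i + s)" for i by (simp add: pm)
      then show ?thesis unfolding T_def S_cyc_def a_def by simp
    qed
    moreover have "finite {S_cyc h n \<mu> k | k. k < n}" by simp
    ultimately show ?thesis unfolding M_def using n by (intro Max_ge) auto
  qed
  define c where "c = h * \<epsilon> * \<bar>E\<bar> / \<bar>\<bar>E\<bar> - 1\<bar>"
  have c_nn: "c \<ge> 0" using h eps by (simp add: c_def)
  define B where "B k = c * T k" for k
  have Bnn: "B k \<ge> 0" for k using c_nn Tnn by (simp add: B_def)
  have rbound: "\<bar>r k\<bar> \<le> h*\<epsilon>" for k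
    using approx[of k] h by (simp add: r_def g_def abs_mult mult_left_mono)
  have Bstep: "\<bar>a k\<bar> * B k = B (Suc k) + c * (1 - 1/\<bar>E\<bar>)" for k
  proof -
    have "\<bar>a k\<bar> * B k = c * (\<bar>a k\<bar> * T k)" by (simp add: B_def)
    also have "\<dots> = B (Suc k) + c * (1 - 1/\<bar>E\<bar>)" by (simp only: Trec B_def) (simp add: algebra_simps)
    finally show ?thesis .
  qed
  obtain d where drec: "\<And>k. d (Suc k) = a k * d k + r k" and dB: "\<And>k. \<bar>d k\<bar> \<le> B k"
  proof (cases "\<bar>E\<bar> < 1")
    case True
    have ab: "\<bar>\<bar>E\<bar> - 1\<bar> = 1 - \<bar>E\<bar>" using True by simp
    have "c * (1 - 1/\<bar>E\<bar>) = - (h*\<epsilon>)" using True E0 unfolding c_def ab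
      by (simp add: divide_simps) (simp add: algebra_simps)
    then have "B (Suc k) = \<bar>a k\<bar> * B k + h*\<epsilon>" for k using Bstep[of k] by linarith
    then have "\<bar>F a r 0 k\<bar> \<le> B k" for k by (rule fwd_bound) (simp_all add: Bnn rbound)
    then show thesis using that[of "F a r 0"] by simp
  next
    case False
    then have "\<bar>E\<bar> > 1" using E1 unfolding E_def by linarith
    then have ab: "\<bar>\<bar>E\<bar> - 1\<bar> = \<bar>E\<bar> - 1" by simp
    have "c * (1 - 1/\<bar>E\<bar>) = h*\<epsilon>" using \<open>\<bar>E\<bar> > 1\<close> E0 unfolding c_def ab
      by (simp add: divide_simps)
    then have "\<bar>a k\<bar> * B k = B (Suc k) + h*\<epsilon>" for k using Bstep[of k] by linarith
    then obtain x where "\<forall>k. \<bar>F a r x k\<bar> \<le> B k"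
      using bwd_bound[of a B "h*\<epsilon>" r] a0 rbound Bnn by blast
    then show thesis using that[of "F a r x"] by simp
  qed
  define y where "y k = \<xi> k - d k" for k
  show ?thesis
  proof (intro exI[of _ y] conjI allI)
    fix k
    show "delta_h h y k - \<mu> (k + s) * y k = f k"
    proof -
      define D where "D = delta_h h \<xi> k"
      have hD: "\<xi> (Suc k) = \<xi> k + h * D" using h by (simp add: D_def delta_h_def)
      have ds: "d (Suc k) = d k + h * \<mu> (k + s) * d k + h * (D - \<mu> (k + s) * \<xi> k - f k)"
        using drec[of k] by (simp add: a_def r_def g_def D_def algebra_simps)
      have "delta_h h y k = (y (Suc k) - y k) / h" by (simp add: delta_h_def)
      also have "y (Suc k) - y k = h * (D - \<mu> (k + s) * d k - (D - \<mu> (k + s) * \<xi> k - f k))"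
        unfolding y_def hD ds by (simp add: algebra_simps)
      finally have "delta_h h y k = D - \<mu> (k + s) * d k - (D - \<mu> (k + s) * \<xi> k - f k)"
        using h by simp
      then show ?thesis by (simp add: y_def algebra_simps)
    qed
    have "\<bar>\<xi> k - y k\<bar> = \<bar>d k\<bar>" by (simp add: y_def)
    also have "\<dots> \<le> c * T k" using dB[of k] by (simp add: B_def)
    also have "\<dots> \<le> c * M" using TM[of k] c_nn by (simp add: mult_left_mono)
    also have "\<dots> = K0 h n \<mu> * \<epsilon>" by (simp add: c_def K0_def E_def M_def abs_minus_commute)
    finally show "\<bar>\<xi> k - y k\<bar> \<le> K0 h n \<mu> * \<epsilon>" .
  qed
qed


lemma factor:
  fixes h :: real and lam y :: "nat \<Rightarrow> real"
  assumes h: "h \<noteq> 0"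
  shows "delta_h h (delta_h h (delta_h h y)) k + lam (k + 2) * delta_h h (delta_h h y) k
       + (delta_h h lam (k + 1) - lam (k + 1) * lam (k + 2)) * delta_h h y k
       + (delta_h h (delta_h h lam) k - lam k * delta_h h lam (k + 1)
                 - lam k * lam (k + 1) * lam (k + 2)) * y k
     = (let u = (\<lambda>k. delta_h h y k + lam k * y k);
            v = (\<lambda>k. delta_h h u k - lam (k + 1) * u k)
        in delta_h h v k + lam (k + 2) * v k)"
  using h by (simp add: delta_h_def Let_def field_simps)

lemma K0_pos:
  fixes h :: real and \<mu> :: "nat \<Rightarrow> real"
  assumes h: "h > 0" and n: "n > 0" and nz: "\<And>k. 1 + h * \<mu> k \<noteq> 0"
    and E: "0 < \<bar>e_cyc h n \<mu>\<bar>" "\<bar>e_cyc h n \<mu>\<bar> \<noteq> 1"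
  shows "K0 h n \<mu> > 0"
proof -
  have S0: "S_cyc h n \<mu> 0 > 0" unfolding S_cyc_def
    using n nz by (intro sum_pos prod_pos) auto
  have "S_cyc h n \<mu> 0 \<le> Max {S_cyc h n \<mu> k | k. k < n}"
    using n by (intro Max_ge) auto
  then have "Max {S_cyc h n \<mu> k | k. k < n} > 0" using S0 by linarith
  moreover have "\<bar>1 - \<bar>e_cyc h n \<mu>\<bar>\<bar> > 0" using E by simp
  ultimately show ?thesis unfolding K0_def using h E by simp
qed


theorem theorem5p4:
  fixes h :: real and n :: nat and lam :: "nat \<Rightarrow> real"
  assumes hpos: "h > 0"
    and cyc: "is_cycle n lam"
    and vals: "\<forall>k. lam k \<noteq> 1 / h \<and> lam k \<noteq> - (1 / h)"
    and e1: "0 < \<bar>e_cyc h n lam\<bar>" "\<bar>e_cyc h n lam\<bar> \<noteq> 1"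
    and e2: "0 < \<bar>e_cyc h n (\<lambda>k. - lam k)\<bar>" "\<bar>e_cyc h n (\<lambda>k. - lam k)\<bar> \<noteq> 1"
  defines "p \<equiv> \<lambda>k. lam (k + 2)"
    and "q \<equiv> \<lambda>k. delta_h h lam (k + 1) - lam (k + 1) * lam (k + 2)"
    and "r \<equiv> \<lambda>k. delta_h h (delta_h h lam) k - lam k * delta_h h lam (k + 1)
                 - lam k * lam (k + 1) * lam (k + 2)"
  shows "HU_stable
           (\<lambda>y k. delta_h h (delta_h h (delta_h h y)) k + p k * delta_h h (delta_h h y) k
                   + q k * delta_h h y k + r k * y k)
           (\<lambda>k. 0)
           (K0 h n lam * (K0 h n (\<lambda>k. - lam k))^2)"
proof -
  have n: "n > 0" and per: "\<And>k. lam (k + n) = lam k" using cyc by (auto simp: is_cycle_def)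
  have perm: "\<And>k. (\<lambda>k. - lam k) (k + n) = (\<lambda>k. - lam k) k" using per by simp
  have nz1: "1 + h * lam k \<noteq> 0" for k
  proof
    assume "1 + h * lam k = 0"
    then have "lam k = - (1/h)" using hpos by (simp add: field_simps)
    then show False using vals by blast
  qed
  have nz2: "1 + h * (- lam k) \<noteq> 0" for k
  proof
    assume "1 + h * (- lam k) = 0"
    then have "lam k = 1/h" using hpos by (simp add: field_simps)
    then show False using vals by blast
  qed
  define Ka where "Ka = K0 h n lam"
  define Kb where "Kb = K0 h n (\<lambda>k. - lam k)"
  have Ka: "Ka > 0" unfolding Ka_def using K0_pos[OF hpos n nz1 e1] .
  have Kb: "Kb > 0" unfolding Kb_def by (rule K0_pos[OF hpos n _ e2]) (use nz2 in simp)
  define L1 where "L1 y = (\<lambda>k. delta_h h y k + lam k * y k)" for y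
  define L2 where "L2 u = (\<lambda>k. delta_h h u k - lam (k + 1) * u k)" for u
  define L3 where "L3 v = (\<lambda>k. delta_h h v k + lam (k + 2) * v k)" for v
  have fac: "delta_h h (delta_h h (delta_h h y)) k + p k * delta_h h (delta_h h y) k
                   + q k * delta_h h y k + r k * y k = L3 (L2 (L1 y)) k" for y k
    using factor[where h=h and lam=lam and y=y and k=k] hpos unfolding p_def q_def r_def L1_def L2_def L3_def Let_def by simp
  show ?thesis
    unfolding HU_stable_def
  proof (intro conjI allI impI)
    show "K0 h n lam * (K0 h n (\<lambda>k. - lam k))^2 > 0" using Ka Kb by (simp add: Ka_def Kb_def)
    fix \<epsilon> :: real and \<xi> :: "nat \<Rightarrow> real"
    assume eps: "\<epsilon> > 0"
    assume hyp: "\<forall>t. \<bar>delta_h h (delta_h h (delta_h h \<xi>)) t + p t * delta_h h (delta_h h \<xi>) t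
                   + q t * delta_h h \<xi> t + r t * \<xi> t - 0\<bar> \<le> \<epsilon>"
    define u where "u = L1 \<xi>"
    define v where "v = L2 u"
    have hv: "\<bar>L3 v k\<bar> \<le> \<epsilon>" for k using hyp fac[of \<xi> k] unfolding u_def v_def by (metis diff_zero)
    obtain w where w1: "\<forall>k. delta_h h w k - (- lam (k + 2)) * w k = 0"
      and w2: "\<forall>k. \<bar>v k - w k\<bar> \<le> Kb * \<epsilon>"
      using first_order[of h n "\<lambda>k. - lam k" \<epsilon> v 2 "\<lambda>k. 0"] hpos n perm nz2 e2 eps hv
      unfolding Kb_def L3_def by auto
    obtain z where z1: "\<forall>k. delta_h h z k - lam (k + 1) * z k = w k"
      and z2: "\<forall>k. \<bar>u k - z k\<bar> \<le> Ka * (Kb * \<epsilon>)"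
      using first_order[of h n lam "Kb * \<epsilon>" u 1 w] hpos n per nz1 e1 eps Kb w2
      unfolding Ka_def v_def L2_def by auto
    obtain y where y1: "\<forall>k. delta_h h y k - (- lam (k + 0)) * y k = z k"
      and y2: "\<forall>k. \<bar>\<xi> k - y k\<bar> \<le> Kb * (Ka * (Kb * \<epsilon>))"
      using first_order[of h n "\<lambda>k. - lam k" "Ka * (Kb * \<epsilon>)" \<xi> 0 z] hpos n perm nz2 e2 eps Ka Kb z2
      unfolding Kb_def u_def L1_def by auto
    have "L1 y = z" using y1 by (auto simp: L1_def)
    moreover have "L2 z = w" using z1 by (auto simp: L2_def)
    moreover have "L3 w = (\<lambda>k. 0)" using w1 by (auto simp: L3_def)
    ultimately have Ly: "L3 (L2 (L1 y)) k = 0" for k by simp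
    show "\<exists>y. (\<forall>t. delta_h h (delta_h h (delta_h h y)) t + p t * delta_h h (delta_h h y) t
                   + q t * delta_h h y t + r t * y t = 0) \<and>
             (\<forall>t. \<bar>\<xi> t - y t\<bar> \<le> K0 h n lam * (K0 h n (\<lambda>k. - lam k))\<^sup>2 * \<epsilon>)"
    proof (intro exI[of _ y] conjI allI)
      fix t
      show "delta_h h (delta_h h (delta_h h y)) t + p t * delta_h h (delta_h h y) t
                   + q t * delta_h h y t + r t * y t = 0" using fac[of y t] Ly by simp
      show "\<bar>\<xi> t - y t\<bar> \<le> K0 h n lam * (K0 h n (\<lambda>k. - lam k))\<^sup>2 * \<epsilon>"
        using y2 by (simp add: Ka_def Kb_def power2_eq_square algebra_simps)
    qed
  qed
qed

end
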